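(* Let $k$ be a field, $G$ an ordered abelian group, and $\mathcal{M}$ the valuation ideal of the power series field $k((G))$ with its canonical valuation. Let $f(X)=\sum_{i\ge1}c_iX^i\in k[[X]]$ with $c_1\neq0$, and let $f:\mathcal{M}\to\mathcal{M}$ be the induced map $y\mapsto\sum_{i\ge1}c_iy^i$. Then $f$ is an isomorphism of ultrametric spaces from $\mathcal{M}$ onto $\mathcal{M}$.
   Context: $k((G))$ consists of formal sums $a=\sum_{g\in G}c_gt^g$, $c_g\in k$, with well ordered support $\{g:c_g\ne0\}$; the canonical valuation is $va=\min\operatorname{supp}(a)$, $v0=\infty$, and $\mathcal{M}=\{a: va>0\}$. For $y\in\mathcal{M}$ the series $\sum_i c_iy^i$ converges to a well-defined element of $\mathcal{M}$. $\mathcal{M}$ is an ultrametric space with $u(a,b)=v(a-b)$. A map $g$ between ultrametric spaces is an isomorphism of ultrametric spaces if it is bijective and there is a strictly increasing map $\varphi$ between the value sets with $u'(gy,gz)=\varphi(u(y,z))$ for all $y\neq z$. *)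

theory Defs
  imports "HOL-Computational_Algebra.Formal_Power_Series"
begin

definition hsupp :: "('g \<Rightarrow> 'k::zero) \<Rightarrow> 'g set" where
  "hsupp a = {g. a g \<noteq> 0}"

definition hahn :: "('g::linordered_ab_group_add \<Rightarrow> 'k::field) set" where
  "hahn = {a. wfp_on (hsupp a) (<)}"

definition hval :: "('g::linordered_ab_group_add \<Rightarrow> 'k::field) \<Rightarrow> 'g" where
  "hval a = (LEAST g. a g \<noteq> 0)"

text \<open>Valuation ideal M = {a. v a > 0} (including 0, since v 0 = \<infinity>).\<close>
definition hahn_M :: "('g::linordered_ab_group_add \<Rightarrow> 'k::field) set" where
  "hahn_M = {a \<in> hahn. \<forall>g. a g \<noteq> 0 \<longrightarrow> 0 < g}"

definition hmul :: "('g::linordered_ab_group_add \<Rightarrow> 'k::field) \<Rightarrow> ('g \<Rightarrow> 'k) \<Rightarrow> ('g \<Rightarrow> 'k)" where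
  "hmul a b = (\<lambda>g. \<Sum>h\<in>{h. a h \<noteq> 0 \<and> b (g - h) \<noteq> 0}. a h * b (g - h))"

primrec hpow :: "('g::linordered_ab_group_add \<Rightarrow> 'k::field) \<Rightarrow> nat \<Rightarrow> ('g \<Rightarrow> 'k)" where
  "hpow y 0 = (\<lambda>g. if g = 0 then 1 else 0)"
| "hpow y (Suc n) = hmul y (hpow y n)"

text \<open>The induced map y \<mapsto> \<Sum>_{i\<ge>1} c_i y^i; the sum is taken coefficientwise
  (for y \<in> M only finitely many terms contribute to each coefficient).\<close>
definition hahn_eval :: "'k fps \<Rightarrow> ('g::linordered_ab_group_add \<Rightarrow> 'k::field) \<Rightarrow> ('g \<Rightarrow> 'k)" where
  "hahn_eval f y = (\<lambda>g. \<Sum>i\<in>{i. 1 \<le> i \<and> fps_nth f i * hpow y i g \<noteq> 0}. fps_nth f i * hpow y i g)"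

definition hdist :: "('g::linordered_ab_group_add \<Rightarrow> 'k::field) \<Rightarrow> ('g \<Rightarrow> 'k) \<Rightarrow> 'g" where
  "hdist a b = hval (\<lambda>g. a g - b g)"

definition valset :: "('a \<Rightarrow> 'a \<Rightarrow> 'v) \<Rightarrow> 'a set \<Rightarrow> 'v set" where
  "valset u A = {u y z | y z. y \<in> A \<and> z \<in> A \<and> y \<noteq> z}"

definition ultra_iso ::
  "('a \<Rightarrow> 'a \<Rightarrow> 'v::order) \<Rightarrow> 'a set \<Rightarrow> ('b \<Rightarrow> 'b \<Rightarrow> 'w::order) \<Rightarrow> 'b set \<Rightarrow> ('a \<Rightarrow> 'b) \<Rightarrow> bool" where
  "ultra_iso u A u' B g \<longleftrightarrow> bij_betw g A B \<and>
     (\<exists>\<phi>. strict_mono_on (valset u A) \<phi> \<and> \<phi> ` valset u A \<subseteq> valset u' B \<and>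
          (\<forall>y\<in>A. \<forall>z\<in>A. y \<noteq> z \<longrightarrow> u' (g y) (g z) = \<phi> (u y z)))"

end

theory Submission
  imports Defs "HOL-Library.Infinite_Set"
begin

fun nsums :: "'g::linordered_ab_group_add set \<Rightarrow> nat \<Rightarrow> 'g set" where
  "nsums S 0 = {0}"
| "nsums S (Suc n) = {s + x | s x. s \<in> S \<and> x \<in> nsums S n}"

lemma sums_pos:
  assumes "S \<subseteq> {0<..}" "x \<in> nsums S n"
  shows "0 \<le> x \<and> (0 < n \<longrightarrow> 0 < x)"
  using assms(2)
proof (induction n arbitrary: x)
  case 0 then show ?case by simp
next
  case (Suc n)
  then obtain s y where "s \<in> S" "y \<in> nsums S n" "x = s + y" by auto
  with Suc.IH[of y] assms(1) show ?case
    by (auto intro: add_pos_nonneg)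
qed

lemma sums_add:
  "x \<in> nsums S a \<Longrightarrow> y \<in> nsums S b \<Longrightarrow> x + y \<in> nsums S (a + b)"
proof (induction a arbitrary: x)
  case 0 then show ?case by simp
next
  case (Suc a)
  then obtain s z where sz: "s \<in> S" "z \<in> nsums S a" "x = s + z" by auto
  have "z + y \<in> nsums S (a + b)" using Suc.IH[OF sz(2) Suc.prems(2)] .
  then have "s + (z + y) \<in> nsums S (Suc (a + b))" using sz(1) by auto
  then show ?case using sz(3) by (simp add: add.assoc)
qed

lemma sums_mono: "S \<subseteq> S' \<Longrightarrow> nsums S n \<subseteq> nsums S' n"
  by (induction n) auto

lemma sums_one: "s \<in> S \<Longrightarrow> s \<in> nsums S (Suc 0)"
  by (auto intro!: exI[of _ s])

lemma not_wfp_onD: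
  assumes "\<not> wfp_on A ((<)::'a::linorder\<Rightarrow>_)"
  shows "\<exists>B. B \<subseteq> A \<and> B \<noteq> {} \<and> (\<forall>z\<in>B. \<exists>y\<in>B. y < z)"
proof -
  have "\<not> (\<forall>B \<subseteq> A. B \<noteq> {} \<longrightarrow> (\<exists>z \<in> B. \<forall>y. y < z \<longrightarrow> y \<notin> B))"
    using assms wfp_on_iff_ex_minimal by metis
  then obtain B where "B \<subseteq> A" "B \<noteq> {}" "\<not> (\<exists>z \<in> B. \<forall>y. y < z \<longrightarrow> y \<notin> B)"
    by blast
  then show ?thesis by (intro exI[of _ B]) blast
qed

lemma wo_min:
  assumes "wfp_on A ((<)::'a::linorder\<Rightarrow>_)" "B \<subseteq> A" "B \<noteq> {}"
  shows "\<exists>z\<in>B. \<forall>y\<in>B. z \<le> y"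
proof -
  have "\<exists>z\<in>B. \<forall>y. y < z \<longrightarrow> y \<notin> B"
    using assms wfp_on_iff_ex_minimal by metis
  then show ?thesis by (meson not_le)
qed

lemma no_desc_wfp_on:
  assumes "\<And>f::nat \<Rightarrow> 'a::linorder. \<not> (\<forall>k. f k \<in> A \<and> f (Suc k) < f k)"
  shows "wfp_on A (<)"
proof (rule ccontr)
  assume "\<not> wfp_on A (<)"
  from not_wfp_onD[OF this] obtain B where B: "B \<subseteq> A" "B \<noteq> {}" "\<And>z. z\<in>B \<Longrightarrow> \<exists>y\<in>B. y < z"
    by blast
  then obtain b where b: "b \<in> B" by blast
  have "\<exists>f. \<forall>n. f n \<in> B \<and> f (Suc n) < f n"
    by (rule dependent_nat_choice[where P="\<lambda>_ x. x \<in> B"]) (use b B(3) in auto)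
  then obtain f where f: "\<And>n. f n \<in> B \<and> f (Suc n) < f n" by blast
  have "\<forall>k. f k \<in> A \<and> f (Suc k) < f k" using f B(1) by blast
  then show False using assms[of f] by simp
qed

lemma wo_nondec_subseq:
  fixes s :: "nat \<Rightarrow> 'a::linorder"
  assumes "wfp_on S (<)" "\<And>k. s k \<in> S"
  shows "\<exists>r::nat\<Rightarrow>nat. strict_mono r \<and> (\<forall>i j::nat. i \<le> j \<longrightarrow> s (r i) \<le> s (r j))"
proof -
  obtain r where r: "strict_mono r" "monoseq (\<lambda>n. s (r n))" using seq_monosub by blast
  show ?thesis
  proof (cases "\<forall>m n::nat. m \<le> n \<longrightarrow> s (r m) \<le> s (r n)")
    case True
    have *: "strict_mono r \<and> (\<forall>i j::nat. i \<le> j \<longrightarrow> s (r i) \<le> s (r j))" using True r(1) by simp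
    show ?thesis by (rule exI[of _ r]) (rule *)
  next
    case False
    then have dec: "\<And>m n. m \<le> n \<Longrightarrow> s (r n) \<le> s (r m)" using r(2) unfolding monoseq_def by auto
    have "range (\<lambda>n. s (r n)) \<subseteq> S" using assms(2) by auto
    from wo_min[OF assms(1) this] obtain z where z: "z \<in> range (\<lambda>n. s (r n))" "\<And>y. y \<in> range (\<lambda>n. s (r n)) \<Longrightarrow> z \<le> y"
      by blast
    then obtain n0 where n0: "z = s (r n0)" by auto
    have const: "s (r (n0 + j)) = s (r n0)" for j
    proof (rule order_antisym)
      show "s (r (n0 + j)) \<le> s (r n0)" by (rule dec) simp
      show "s (r n0) \<le> s (r (n0 + j))" using z(2)[of "s (r (n0 + j))"] n0 by simp
    qed
    have "strict_mono (\<lambda>j. r (n0 + j))" using r(1) by (simp add: strict_mono_def)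
    moreover have "\<forall>i j::nat. i \<le> j \<longrightarrow> s (r (n0 + i)) \<le> s (r (n0 + j))" using const by simp
    ultimately have **: "strict_mono (\<lambda>j. r (n0 + j)) \<and> (\<forall>i j::nat. i \<le> j \<longrightarrow> s (r (n0 + i)) \<le> s (r (n0 + j)))" by blast
    show ?thesis by (rule exI[of _ "\<lambda>j. r (n0 + j)"]) (rule **)
  qed
qed

definition lexp :: "'g::linorder \<times> nat \<Rightarrow> 'g \<times> nat \<Rightarrow> bool" where
  "lexp p q \<longleftrightarrow> fst p < fst q \<or> (fst p = fst q \<and> snd q < snd p)"

lemma lexp_trans: "lexp p q \<Longrightarrow> lexp q r \<Longrightarrow> lexp p r"
  unfolding lexp_def by auto


lemma aux_lt: "s + y < s' + y' \<Longrightarrow> s' \<le> s \<Longrightarrow> (y::'g::linordered_ab_group_add) < y'"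
  by (metis add_mono not_less)

lemma aux_le: "s + y = s' + y' \<Longrightarrow> s' \<le> s \<Longrightarrow> (y::'g::linordered_ab_group_add) \<le> y'"
  by (metis add_right_mono add_le_cancel_left)

lemma neumann_core:
  fixes S :: "'g::linordered_ab_group_add set"
  assumes S: "S \<subseteq> {0<..}" "wfp_on S (<)"
  shows "\<not> (\<exists>f. \<forall>k. f k \<in> {(x,n). x \<in> nsums S n} \<and> lexp (f (Suc k)) (f k))"
proof
  define P where "P = {(x,n). x \<in> nsums S n}"
  define bad where "bad p \<longleftrightarrow> (\<exists>f. f 0 = p \<and> (\<forall>k. f k \<in> P \<and> lexp (f (Suc k)) (f k)))" for p
  assume "\<exists>f. \<forall>k. f k \<in> {(x,n). x \<in> nsums S n} \<and> lexp (f (Suc k)) (f k)"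
  then obtain f0 where f0: "\<forall>k. f0 k \<in> P \<and> lexp (f0 (Suc k)) (f0 k)" unfolding P_def by blast
  have bad0: "bad (f0 0)" unfolding bad_def using f0 by blast
  have step: "p \<in> P \<and> (\<exists>q. lexp q p \<and> bad q)" if "bad p" for p
  proof -
    obtain f where f: "f 0 = p" "\<forall>k. f k \<in> P \<and> lexp (f (Suc k)) (f k)" using \<open>bad p\<close> unfolding bad_def by blast
    have "bad (f (Suc 0))" unfolding bad_def using f(2) by (intro exI[of _ "\<lambda>k. f (Suc k)"]) simp
    moreover have "lexp (f (Suc 0)) (f 0)" "f 0 \<in> P" using f(2) by blast+
    ultimately show ?thesis using f(1) by blast
  qed
  define nxt where "nxt p = (SOME q. lexp q p \<and> bad q \<and> (\<forall>q'. lexp q' p \<and> bad q' \<longrightarrow> snd q \<le> snd q'))" for p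
  have nxt: "lexp (nxt p) p \<and> bad (nxt p) \<and> (\<forall>q'. lexp q' p \<and> bad q' \<longrightarrow> snd (nxt p) \<le> snd q')"
    if "bad p" for p
  proof -
    obtain q0 where q0: "lexp q0 p" "bad q0" using step[OF \<open>bad p\<close>] by blast
    define n where "n = (LEAST n. \<exists>q. lexp q p \<and> bad q \<and> snd q = n)"
    have "\<exists>q. lexp q p \<and> bad q \<and> snd q = n" unfolding n_def
      by (rule LeastI[of _ "snd q0"]) (use q0 in blast)
    then obtain q where q: "lexp q p" "bad q" "snd q = n" by blast
    have mn: "\<forall>q'. lexp q' p \<and> bad q' \<longrightarrow> n \<le> snd q'" unfolding n_def by (auto intro: Least_le)
    have "\<exists>q. lexp q p \<and> bad q \<and> (\<forall>q'. lexp q' p \<and> bad q' \<longrightarrow> snd q \<le> snd q')"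
      by (rule exI[of _ q]) (use q mn in simp)
    then show ?thesis unfolding nxt_def by (rule someI_ex)
  qed
  define m where "m k = (nxt ^^ k) (f0 0)" for k
  have msuc: "m (Suc k) = nxt (m k)" for k by (simp add: m_def)
  have mbad: "bad (m k)" for k
    by (induction k) (auto simp: msuc bad0 nxt m_def[of 0])
  have mP: "m k \<in> P" for k using step mbad by blast
  have mlt: "lexp (m l) (m k)" if "k < l" for k l
    using that
  proof (induction l)
    case 0 then show ?case by simp
  next
    case (Suc l)
    have "lexp (m (Suc l)) (m l)" using nxt[OF mbad] msuc by simp
    then show ?case using Suc by (metis less_Suc_eq lexp_trans)
  qed
  have snd_pos: "0 < snd p" if bp: "bad p" for p
  proof (rule ccontr)
    assume "\<not> 0 < snd p"
    then have "snd p = 0" by simp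
    obtain q where q: "lexp q p" "bad q" using step[OF bp] by blast
    have "p \<in> P" "q \<in> P" using step q bp by blast+
    then have "fst p \<in> nsums S (snd p)" "fst q \<in> nsums S (snd q)" unfolding P_def by auto
    then have "fst p = 0" using \<open>snd p = 0\<close> by simp
    have "0 \<le> fst q \<and> (0 < snd q \<longrightarrow> 0 < fst q)"
      using sums_pos[OF S(1) \<open>fst q \<in> nsums S (snd q)\<close>] .
    then show False using q(1) \<open>fst p = 0\<close> \<open>snd p = 0\<close> unfolding lexp_def by auto
  qed
  have dec: "\<exists>s y. s \<in> S \<and> y \<in> nsums S (snd (m (Suc k)) - 1) \<and> fst (m (Suc k)) = s + y" for k
  proof -
    obtain n where n: "snd (m (Suc k)) = Suc n" using snd_pos[OF mbad[of "Suc k"]] gr0_implies_Suc by blast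
    have "fst (m (Suc k)) \<in> nsums S (Suc n)" using mP[of "Suc k"] n unfolding P_def by (cases "m (Suc k)") auto
    then show ?thesis using n by auto
  qed
  then obtain sf yf where sy: "\<And>k. sf k \<in> S \<and> yf k \<in> nsums S (snd (m (Suc k)) - 1) \<and> fst (m (Suc k)) = sf k + yf k"
    by metis
  obtain r :: "nat \<Rightarrow> nat" where r: "strict_mono r" "\<And>i j. i \<le> j \<Longrightarrow> sf (r i) \<le> sf (r j)"
    using wo_nondec_subseq[OF S(2), of sf] sy by blast
  define h where "h j = (yf (r j), snd (m (Suc (r j))) - 1)" for j
  have hP: "h j \<in> P" for j using sy unfolding h_def P_def by simp
  have hlt: "lexp (h (Suc j)) (h j)" for j
  proof -
    let ?A = "m (Suc (r (Suc j)))" and ?B = "m (Suc (r j))"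
    have AB: "lexp ?A ?B" using mlt r(1) by (simp add: strict_mono_def)
    have sle: "sf (r j) \<le> sf (r (Suc j))" using r(2) by simp
    have pB: "0 < snd ?B" using snd_pos mbad by blast
    have eA: "fst ?A = sf (r (Suc j)) + yf (r (Suc j))" and eB: "fst ?B = sf (r j) + yf (r j)" using sy by blast+
    show ?thesis
    proof (cases "fst ?A < fst ?B")
      case True
      then have "yf (r (Suc j)) < yf (r j)" using eA eB sle aux_lt by metis
      then show ?thesis unfolding h_def lexp_def by simp
    next
      case False
      then have eq: "fst ?A = fst ?B" and sn: "snd ?B < snd ?A" using AB unfolding lexp_def by auto
      have "yf (r (Suc j)) \<le> yf (r j)" using eA eB eq sle aux_le by metis
      then show ?thesis unfolding h_def lexp_def using sn pB by auto
    qed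
  qed
  have "bad (h 0)" unfolding bad_def using hP hlt by blast
  have "lexp (h 0) (m (Suc (r 0)))"
  proof -
    have "sf (r 0) > 0" using sy S(1) by blast
    then have "yf (r 0) < fst (m (Suc (r 0)))" using sy by simp
    then show ?thesis unfolding h_def lexp_def by simp
  qed
  moreover have "lexp (m (Suc (r 0))) (m (r 0))" using mlt by simp
  ultimately have "lexp (h 0) (m (r 0))" by (rule lexp_trans)
  moreover have "\<forall>q'. lexp q' (m (r 0)) \<and> bad q' \<longrightarrow> snd (nxt (m (r 0))) \<le> snd q'"
    using nxt[OF mbad[of "r 0"]] by blast
  ultimately have "snd (nxt (m (r 0))) \<le> snd (h 0)" using \<open>bad (h 0)\<close> by blast
  then have "snd (m (Suc (r 0))) \<le> snd (h 0)" using msuc by simp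
  then show False using snd_pos[OF mbad[of "Suc (r 0)"]] unfolding h_def by simp
qed

lemma neumann_wo:
  fixes S :: "'g::linordered_ab_group_add set"
  assumes S: "S \<subseteq> {0<..}" "wfp_on S (<)"
  shows "wfp_on (\<Union>n. nsums S n) (<)"
proof (rule no_desc_wfp_on)
  fix f :: "nat \<Rightarrow> 'g"
  show "\<not> (\<forall>k. f k \<in> (\<Union>n. nsums S n) \<and> f (Suc k) < f k)"
  proof
    assume a: "\<forall>k. f k \<in> (\<Union>n. nsums S n) \<and> f (Suc k) < f k"
    then obtain n where n: "\<And>k. f k \<in> nsums S (n k)" by simp metis
    have "\<exists>g. \<forall>k. g k \<in> {(x,n). x \<in> nsums S n} \<and> lexp (g (Suc k)) (g k)"
      apply (rule exI[of _ "\<lambda>k. (f k, n k)"]) using a n unfolding lexp_def by auto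
    then show False using neumann_core[OF S] by blast
  qed
qed

lemma neumann_fin:
  fixes S :: "'g::linordered_ab_group_add set"
  assumes S: "S \<subseteq> {0<..}" "wfp_on S (<)"
  shows "finite {n. x \<in> nsums S n}"
proof (rule ccontr)
  assume inf: "infinite {n. x \<in> nsums S n}"
  let ?e = "enumerate {n. x \<in> nsums S n}"
  have "\<exists>g. \<forall>k. g k \<in> {(x,n). x \<in> nsums S n} \<and> lexp (g (Suc k)) (g k)"
    apply (rule exI[of _ "\<lambda>k. (x, ?e k)"]) using enumerate_in_set[OF inf] enumerate_mono[OF _ inf] unfolding lexp_def by auto
  then show False using neumann_core[OF S] by blast
qed



definition hpos :: "('g::linordered_ab_group_add \<Rightarrow> 'k::field) \<Rightarrow> bool" where
  "hpos y \<longleftrightarrow> (\<forall>g. y g \<noteq> 0 \<longrightarrow> 0 < g)"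

lemma hpos_supp: "hpos y \<Longrightarrow> hsupp y \<subseteq> {0<..}"
  unfolding hpos_def hsupp_def by auto

lemma hahn_MD: "y \<in> hahn_M \<Longrightarrow> hpos y \<and> wfp_on (hsupp y) (<)"
  unfolding hahn_M_def hahn_def hpos_def by auto

lemma hahn_MI: "hpos y \<Longrightarrow> wfp_on (hsupp y) (<) \<Longrightarrow> y \<in> hahn_M"
  unfolding hahn_M_def hahn_def hpos_def by auto

lemma hmul_alt: "hmul a b g = (\<Sum>h\<in>{h. a h * b (g - h) \<noteq> 0}. a h * b (g - h))"
  unfolding hmul_def by simp

lemma hmul_cong:
  assumes "\<And>h. a h * b (g - h) = a' h * b' (g - h)"
  shows "hmul a b g = hmul a' b' g"
proof -
  have S: "{h. a h * b (g - h) \<noteq> 0} = {h. a' h * b' (g - h) \<noteq> 0}" using assms by auto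
  show ?thesis unfolding hmul_alt S using assms by (intro sum.cong) auto
qed

lemma hmul_nz: "hmul a b g \<noteq> 0 \<Longrightarrow> \<exists>h. a h \<noteq> 0 \<and> b (g - h) \<noteq> 0"
proof (rule ccontr)
  assume "hmul a b g \<noteq> 0" "\<not> (\<exists>h. a h \<noteq> 0 \<and> b (g - h) \<noteq> 0)"
  then have "{h. a h \<noteq> 0 \<and> b (g - h) \<noteq> 0} = {}" by auto
  then have "hmul a b g = 0" unfolding hmul_def by (simp only: sum.empty)
  then show False using \<open>hmul a b g \<noteq> 0\<close> by simp
qed

lemma hpow_supp: "hpow y n g \<noteq> 0 \<Longrightarrow> g \<in> nsums (hsupp y) n"
proof (induction n arbitrary: g)
  case 0 then show ?case by (simp split: if_splits)
next
  case (Suc n)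
  then obtain h where h: "y h \<noteq> 0" "hpow y n (g - h) \<noteq> 0" using hmul_nz by fastforce
  have "g - h \<in> nsums (hsupp y) n" using Suc.IH h(2) .
  moreover have "h \<in> hsupp y" using h(1) unfolding hsupp_def by simp
  ultimately have "\<exists>s x. g = s + x \<and> s \<in> hsupp y \<and> x \<in> nsums (hsupp y) n"
    by (intro exI[of _ h] exI[of _ "g - h"]) simp
  then show ?case by simp
qed

lemma hpow_nonneg: "hpos y \<Longrightarrow> hpow y n g \<noteq> 0 \<Longrightarrow> 0 \<le> g \<and> (0 < n \<longrightarrow> 0 < g)"
  using sums_pos[OF hpos_supp hpow_supp] by blast

lemma hpow_local:
  assumes py: "hpos y" and pz: "hpos z"
  shows "(\<forall>h. 0 < h \<and> h \<le> g \<longrightarrow> y h = z h) \<Longrightarrow> hpow y n g = hpow z n g"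
proof (induction n arbitrary: g)
  case 0 then show ?case by simp
next
  case (Suc n)
  have eq: "y h * hpow y n (g - h) = z h * hpow z n (g - h)" for h
  proof (cases "0 < h")
    case False
    then have "y h = 0" "z h = 0" using py pz unfolding hpos_def by auto
    then show ?thesis by simp
  next
    case True
    show ?thesis
    proof (cases "h \<le> g")
      case False
      then have "g - h < 0" by simp
      then have "hpow y n (g - h) = 0" "hpow z n (g - h) = 0"
        using hpow_nonneg[OF py] hpow_nonneg[OF pz] by (meson not_le)+
      then show ?thesis by simp
    next
      case hg: True
      have "y h = z h" using Suc.prems True hg by blast
      moreover have "hpow y n (g - h) = hpow z n (g - h)"
      proof (rule Suc.IH, intro allI impI)
        fix h' assume "0 < h' \<and> h' \<le> g - h"
        then have "0 < h' \<and> h' \<le> g" using True by (meson diff_le_eq le_add_same_cancel1 less_imp_le order.trans)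
        then show "y h' = z h'" using Suc.prems by blast
      qed
      ultimately show ?thesis by simp
    qed
  qed
  show ?case using eq by (simp only: hpow.simps) (rule hmul_cong)
qed

lemma hpow_local2:
  assumes py: "hpos y" and pz: "hpos z" and n: "2 \<le> n"
    and ag: "\<forall>h. 0 < h \<and> h < g \<longrightarrow> y h = z h"
  shows "hpow y n g = hpow z n g"
proof -
  obtain m where m: "n = Suc m" "1 \<le> m" using n by (cases n) auto
  have eq: "y h * hpow y m (g - h) = z h * hpow z m (g - h)" for h
  proof (cases "0 < h")
    case False
    then have "y h = 0" "z h = 0" using py pz unfolding hpos_def by auto
    then show ?thesis by simp
  next
    case True
    show ?thesis
    proof (cases "h < g")
      case False
      then have "g - h \<le> 0" by simp
      then have "hpow y m (g - h) = 0" "hpow z m (g - h) = 0"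
        using hpow_nonneg[OF py, of m "g - h"] hpow_nonneg[OF pz, of m "g - h"] m(2) by auto
      then show ?thesis by simp
    next
      case hg: True
      have "y h = z h" using ag True hg by blast
      moreover have "hpow y m (g - h) = hpow z m (g - h)"
      proof (rule hpow_local[OF py pz], intro allI impI)
        fix h' assume "0 < h' \<and> h' \<le> g - h"
        then have "0 < h' \<and> h' < g" using True by (metis diff_less_eq le_less_trans less_add_same_cancel1)
        then show "y h' = z h'" using ag by blast
      qed
      ultimately show ?thesis by simp
    qed
  qed
  show ?thesis using eq unfolding m(1) by (simp only: hpow.simps) (rule hmul_cong)
qed

lemma hpow1: "hpow y (Suc 0) g = y g"
proof -
  have sub: "{h. y h * hpow y 0 (g - h) \<noteq> 0} \<subseteq> {g}" by auto
  have "hpow y (Suc 0) g = (\<Sum>h\<in>{h. y h * hpow y 0 (g - h) \<noteq> 0}. y h * hpow y 0 (g - h))"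
    by (simp add: hmul_alt)
  also have "\<dots> = (\<Sum>h\<in>{g}. y h * hpow y 0 (g - h))"
    by (rule sum.mono_neutral_left) (use sub in auto)
  also have "\<dots> = y g" by simp
  finally show ?thesis .
qed



lemma wo_from_min:
  assumes "\<And>D. D \<subseteq> A \<Longrightarrow> D \<noteq> {} \<Longrightarrow> \<exists>z\<in>D. \<forall>y\<in>D. z \<le> y"
  shows "wfp_on A ((<)::'a::linorder\<Rightarrow>_)"
proof -
  have "\<forall>D \<subseteq> A. D \<noteq> {} \<longrightarrow> (\<exists>z \<in> D. \<forall>y. y < z \<longrightarrow> y \<notin> D)"
  proof (intro allI impI)
    fix D assume "D \<subseteq> A" "D \<noteq> {}"
    from assms[OF this] obtain z where "z \<in> D" "\<forall>y\<in>D. z \<le> y" by blast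
    then show "\<exists>z \<in> D. \<forall>y. y < z \<longrightarrow> y \<notin> D" by (meson not_le)
  qed
  then show ?thesis using wfp_on_iff_ex_minimal by metis
qed

lemma wo_Un:
  assumes A: "wfp_on A ((<)::'a::linorder\<Rightarrow>_)" and B: "wfp_on B (<)"
  shows "wfp_on (A \<union> B) (<)"
proof (rule wo_from_min)
  fix D assume D: "D \<subseteq> A \<union> B" "D \<noteq> {}"
  show "\<exists>z\<in>D. \<forall>y\<in>D. z \<le> y"
  proof (cases "D \<inter> A = {}")
    case True
    then have "D \<subseteq> B" using D by blast
    from wo_min[OF B this D(2)] show ?thesis .
  next
    case nA: False
    from wo_min[OF A _ nA] obtain a where a: "a \<in> D \<inter> A" "\<forall>y\<in>D \<inter> A. a \<le> y" by blast
    show ?thesis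
    proof (cases "D \<inter> B = {}")
      case True
      then show ?thesis using a D by blast
    next
      case False
      from wo_min[OF B _ False] obtain b where b: "b \<in> D \<inter> B" "\<forall>y\<in>D \<inter> B. b \<le> y" by blast
      have m: "\<exists>z\<in>D. \<forall>y\<in>D. z \<le> y" if za: "z \<in> D" "z \<le> a" "z \<le> b" for z
      proof (rule bexI[OF _ za(1)], rule ballI)
        fix y assume "y \<in> D"
        show "z \<le> y"
        proof (cases "y \<in> A")
          case True
          then have "a \<le> y" using a(2) \<open>y \<in> D\<close> by blast
          then show ?thesis using za(2) by (rule order.trans[rotated])
        next
          case False
          then have "y \<in> B" using D(1) \<open>y \<in> D\<close> by blast
          then have "b \<le> y" using b(2) \<open>y \<in> D\<close> by blast
          then show ?thesis using za(3) by (rule order.trans[rotated])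
        qed
      qed
      show ?thesis
      proof (cases "a \<le> b")
        case True then show ?thesis using m[of a] a(1) by simp
      next
        case False then show ?thesis using m[of b] b(1) by simp
      qed
    qed
  qed
qed

lemma nsums_closed:
  assumes "\<And>x y. x \<in> T \<Longrightarrow> y \<in> T \<Longrightarrow> x + y \<in> T"
  shows "1 \<le> n \<Longrightarrow> nsums T n \<subseteq> T"
proof (induction n)
  case 0 then show ?case by simp
next
  case (Suc n)
  show ?case
  proof (cases n)
    case 0 then show ?thesis by auto
  next
    case (Suc m)
    then show ?thesis using Suc.IH assms by auto
  qed
qed

lemma UN_nsums_closed:
  "x \<in> (\<Union>n. nsums S n) \<Longrightarrow> y \<in> (\<Union>n. nsums S n) \<Longrightarrow> x + y \<in> (\<Union>n. nsums S n)"
  using sums_add by blast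

context
  fixes f :: "'k::field fps"
begin

abbreviation "c \<equiv> fps_nth f"

lemma eval_nz:
  assumes "hahn_eval f y g \<noteq> 0"
  shows "\<exists>i\<ge>1. hpow y i g \<noteq> 0"
proof (rule ccontr)
  assume "\<not> (\<exists>i\<ge>1. hpow y i g \<noteq> 0)"
  then have "{i. 1 \<le> i \<and> c i * hpow y i g \<noteq> 0} = {}" by auto
  then have "hahn_eval f y g = 0" unfolding hahn_eval_def by (simp only: sum.empty)
  then show False using assms by simp
qed

lemma eval_M:
  assumes y: "y \<in> hahn_M"
  shows "hahn_eval f y \<in> hahn_M"
proof -
  have py: "hpos y" and wy: "wfp_on (hsupp y) (<)" using hahn_MD[OF y] by auto
  have sub: "hsupp (hahn_eval f y) \<subseteq> (\<Union>n. nsums (hsupp y) n)"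
  proof
    fix g assume "g \<in> hsupp (hahn_eval f y)"
    then obtain i where "hpow y i g \<noteq> 0" using eval_nz unfolding hsupp_def by blast
    then show "g \<in> (\<Union>n. nsums (hsupp y) n)" using hpow_supp by blast
  qed
  have "hpos (hahn_eval f y)"
    unfolding hpos_def
  proof (intro allI impI)
    fix g assume "hahn_eval f y g \<noteq> 0"
    then obtain i where "i \<ge> 1" "hpow y i g \<noteq> 0" using eval_nz by blast
    then show "0 < g" using hpow_nonneg[OF py] by auto
  qed
  moreover have "wfp_on (hsupp (hahn_eval f y)) (<)"
    using wfp_on_subset[OF neumann_wo[OF hpos_supp[OF py] wy] sub] .
  ultimately show ?thesis by (rule hahn_MI)
qed

lemma fin_idx:
  assumes y: "y \<in> hahn_M"
  shows "finite {i. hpow y i g \<noteq> 0}"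
proof -
  have py: "hpos y" and wy: "wfp_on (hsupp y) (<)" using hahn_MD[OF y] by auto
  have "{i. hpow y i g \<noteq> 0} \<subseteq> {n. g \<in> nsums (hsupp y) n}" using hpow_supp by blast
  then show ?thesis using neumann_fin[OF hpos_supp[OF py] wy] finite_subset by blast
qed

lemma eval_split:
  assumes y: "y \<in> hahn_M"
  shows "hahn_eval f y g = c 1 * y g + (\<Sum>i\<in>{i. 2 \<le> i \<and> c i * hpow y i g \<noteq> 0}. c i * hpow y i g)"
proof -
  define t where "t i = c i * hpow y i g" for i
  define I2 where "I2 = {i. 2 \<le> i \<and> t i \<noteq> 0}"
  have fin: "finite I2"
    by (rule finite_subset[OF _ fin_idx[OF y, of g]]) (auto simp: I2_def t_def)
  have "hahn_eval f y g = sum t {i. 1 \<le> i \<and> t i \<noteq> 0}" unfolding hahn_eval_def t_def ..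
  also have "\<dots> = sum t (insert 1 I2)"
    by (rule sum.mono_neutral_left) (use fin in \<open>auto simp: I2_def\<close>)
  also have "\<dots> = t 1 + sum t I2" using fin by (simp add: I2_def)
  also have "t 1 = c 1 * y g" unfolding t_def using hpow1[of y g] by (simp add: One_nat_def)
  finally show ?thesis unfolding t_def I2_def .
qed

end



lemma dist_eq:
  fixes f :: "'k::field fps" and y z :: "'g::linordered_ab_group_add \<Rightarrow> 'k"
  assumes f1: "fps_nth f 1 \<noteq> 0" and y: "y \<in> hahn_M" and z: "z \<in> hahn_M" and ne: "y \<noteq> z"
  shows "hahn_eval f y \<noteq> hahn_eval f z \<and> hdist (hahn_eval f y) (hahn_eval f z) = hdist y z"
proof -
  have py: "hpos y" and wy: "wfp_on (hsupp y) (<)" using hahn_MD[OF y] by auto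
  have pz: "hpos z" and wz: "wfp_on (hsupp z) (<)" using hahn_MD[OF z] by auto
  define D where "D = {g. y g - z g \<noteq> 0}"
  have sub: "D \<subseteq> hsupp y \<union> hsupp z" unfolding D_def hsupp_def by auto
  have "D \<noteq> {}" using ne unfolding D_def by auto
  from wo_min[OF wo_Un[OF wy wz] sub this] obtain d where d: "d \<in> D" "\<forall>g\<in>D. d \<le> g" by blast
  have hd: "hdist y z = d" unfolding hdist_def hval_def
    by (rule Least_equality) (use d in \<open>auto simp: D_def\<close>)
  have agree: "y h = z h" if "h < d" for h
  proof (rule ccontr)
    assume "y h \<noteq> z h"
    then have "h \<in> D" unfolding D_def by simp
    then show False using d(2) that by (meson not_le)
  qed
  have lt: "hahn_eval f y g = hahn_eval f z g" if "g < d" for g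
  proof -
    have "hpow y i g = hpow z i g" for i
      by (rule hpow_local[OF py pz]) (use agree that in \<open>auto intro: le_less_trans\<close>)
    then show ?thesis unfolding hahn_eval_def by simp
  qed
  have h2: "hpow y i d = hpow z i d" if "2 \<le> i" for i
    by (rule hpow_local2[OF py pz that]) (use agree in auto)
  have S: "{i. 2 \<le> i \<and> fps_nth f i * hpow y i d \<noteq> 0} = {i. 2 \<le> i \<and> fps_nth f i * hpow z i d \<noteq> 0}"
    using h2 by auto
  have S2: "(\<Sum>i\<in>{i. 2 \<le> i \<and> fps_nth f i * hpow y i d \<noteq> 0}. fps_nth f i * hpow y i d)
          = (\<Sum>i\<in>{i. 2 \<le> i \<and> fps_nth f i * hpow z i d \<noteq> 0}. fps_nth f i * hpow z i d)"
    unfolding S by (rule sum.cong) (use h2 in auto)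
  have "hahn_eval f y d - hahn_eval f z d = fps_nth f 1 * (y d - z d)"
    unfolding eval_split[OF y] eval_split[OF z] S2 by (simp add: algebra_simps)
  moreover have "y d - z d \<noteq> 0" using d(1) unfolding D_def by simp
  ultimately have nd: "hahn_eval f y d - hahn_eval f z d \<noteq> 0" using f1 by simp
  have "hdist (hahn_eval f y) (hahn_eval f z) = d" unfolding hdist_def hval_def
  proof (rule Least_equality)
    show "hahn_eval f y d - hahn_eval f z d \<noteq> 0" by (rule nd)
    fix g assume "hahn_eval f y g - hahn_eval f z g \<noteq> 0"
    show "d \<le> g"
    proof (rule ccontr)
      assume "\<not> d \<le> g"
      then have "g < d" by simp
      then have "hahn_eval f y g = hahn_eval f z g" by (rule lt)
      then show False using \<open>hahn_eval f y g - hahn_eval f z g \<noteq> 0\<close> by simp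
    qed
  qed
  moreover have "hahn_eval f y \<noteq> hahn_eval f z" using nd by auto
  ultimately show ?thesis using hd by simp
qed



lemma nsums_empty: "1 \<le> i \<Longrightarrow> nsums {} i = {}"
  by (cases i) auto

lemma hpow_zero_fun: "1 \<le> i \<Longrightarrow> hpow (\<lambda>h. 0::'k::field) i (g::'g::linordered_ab_group_add) = 0"
proof (rule ccontr)
  assume "1 \<le> i" "hpow (\<lambda>h. 0::'k) i g \<noteq> 0"
  then have "g \<in> nsums (hsupp (\<lambda>h. 0::'k)) i" using hpow_supp by blast
  moreover have "hsupp (\<lambda>h. 0::'k) = ({}::'g set)" unfolding hsupp_def by simp
  ultimately show False by (metis empty_iff nsums_empty \<open>1 \<le> i\<close>)
qed

lemma surj_eval:
  fixes f :: "'k::field fps" and w :: "'g::linordered_ab_group_add \<Rightarrow> 'k"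
  assumes f1: "fps_nth f 1 \<noteq> 0" and w: "w \<in> hahn_M"
  shows "\<exists>y\<in>hahn_M. hahn_eval f y = w"
proof -
  have pw: "hpos w" and ww: "wfp_on (hsupp w) (<)" using hahn_MD[OF w] by auto
  define T where "T = (\<Union>n. nsums (hsupp w) n)"
  have wT: "wfp_on T (<)" unfolding T_def by (rule neumann_wo[OF hpos_supp[OF pw] ww])
  have Tpos: "0 \<le> g" if "g \<in> T" for g
    using that sums_pos[OF hpos_supp[OF pw]] unfolding T_def by blast
  have Tcl: "a + b \<in> T" if "a \<in> T" "b \<in> T" for a b
    using that UN_nsums_closed unfolding T_def by blast
  have wsub: "g \<in> T" if "w g \<noteq> 0" for g
  proof -
    have "g \<in> hsupp w" using that unfolding hsupp_def by simp
    then have "g \<in> nsums (hsupp w) (Suc 0)" by (rule sums_one)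
    then show ?thesis unfolding T_def by blast
  qed
  have T0: "0 \<in> T" unfolding T_def by (rule UN_I[of 0]) auto
  define R where "R = {(h, g). h \<in> T \<and> g \<in> T \<and> h < g}"
  have "wfp (\<lambda>x y. x < y \<and> x \<in> T \<and> y \<in> T)" using wT wfp_on_iff_wfp by blast
  moreover have "(\<lambda>x y. (x, y) \<in> R) = (\<lambda>x y. x < y \<and> x \<in> T \<and> y \<in> T)"
    unfolding R_def by (auto simp: fun_eq_iff)
  ultimately have wfR: "wf R" using wfp_wf_eq by metis
  define rs where "rs u g = (\<lambda>h. if h \<in> T \<and> 0 < h \<and> h < g then u h else 0)"
    for u :: "'g \<Rightarrow> 'k" and g
  define H where "H u g = (if g \<in> T then (w g - (\<Sum>i\<in>{i. 2 \<le> i \<and> fps_nth f i * hpow (rs u g) i g \<noteq> 0}.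
       fps_nth f i * hpow (rs u g) i g)) / fps_nth f 1 else 0)" for u g
  define y where "y = wfrec R H"
  have yeq: "y g = H y g" for g
  proof -
    have "y g = H (cut y R g) g" unfolding y_def by (rule wfrec[OF wfR])
    moreover have "rs (cut y R g) g = rs y g" if "g \<in> T"
      unfolding rs_def cut_def R_def using that by (auto simp: fun_eq_iff)
    ultimately show ?thesis unfolding H_def by (cases "g \<in> T") auto
  qed
  have ysupp: "g \<in> T" if "y g \<noteq> 0" for g
    using that yeq[of g] unfolding H_def by (auto split: if_splits)
  have rs_pos: "hpos (rs u g)" for u g unfolding hpos_def rs_def by auto
  have y0: "y 0 = 0"
  proof -
    have rs0: "rs y 0 = (\<lambda>h. 0)" unfolding rs_def by (auto simp: fun_eq_iff)
    have z: "hpow (rs y 0) i 0 = 0" if "2 \<le> i" for i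
      unfolding rs0 by (rule hpow_zero_fun) (use that in simp)
    then have "{i. 2 \<le> i \<and> fps_nth f i * hpow (rs y 0) i 0 \<noteq> 0} = {}"
      by auto
    moreover have "w 0 = 0" using pw unfolding hpos_def by auto
    ultimately show ?thesis using yeq[of 0] T0 unfolding H_def by (simp only: sum.empty) simp
  qed
  have py: "hpos y" unfolding hpos_def
  proof (intro allI impI)
    fix g assume "y g \<noteq> 0"
    then have "g \<in> T" "g \<noteq> 0" using ysupp y0 by auto
    then show "0 < g" using Tpos by (simp add: order.not_eq_order_implies_strict)
  qed
  have ysT: "hsupp y \<subseteq> T" using ysupp unfolding hsupp_def by auto
  have yM: "y \<in> hahn_M" using hahn_MI[OF py wfp_on_subset[OF wT ysT]] .
  have "hahn_eval f y g = w g" for g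
  proof (cases "g \<in> T")
    case True
    have ag: "\<forall>h. 0 < h \<and> h < g \<longrightarrow> y h = rs y g h"
      unfolding rs_def using ysupp by auto
    have h2: "hpow y i g = hpow (rs y g) i g" if "2 \<le> i" for i
      by (rule hpow_local2[OF py rs_pos that ag])
    have S: "{i. 2 \<le> i \<and> fps_nth f i * hpow y i g \<noteq> 0} = {i. 2 \<le> i \<and> fps_nth f i * hpow (rs y g) i g \<noteq> 0}"
      using h2 by auto
    define \<sigma> where "\<sigma> = (\<Sum>i\<in>{i. 2 \<le> i \<and> fps_nth f i * hpow (rs y g) i g \<noteq> 0}. fps_nth f i * hpow (rs y g) i g)"
    have S2: "(\<Sum>i\<in>{i. 2 \<le> i \<and> fps_nth f i * hpow y i g \<noteq> 0}. fps_nth f i * hpow y i g) = \<sigma>"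
      unfolding S \<sigma>_def by (rule sum.cong) (use h2 in auto)
    have yg: "y g = (w g - \<sigma>) / fps_nth f 1" using yeq[of g] True unfolding H_def \<sigma>_def by simp
    show ?thesis unfolding eval_split[OF yM] S2 yg using f1 by (simp add: field_simps)
  next
    case False
    then have "w g = 0" using wsub by blast
    moreover have "hahn_eval f y g = 0"
    proof (rule ccontr)
      assume "hahn_eval f y g \<noteq> 0"
      then obtain i where i: "1 \<le> i" "hpow y i g \<noteq> 0" using eval_nz by blast
      then have "g \<in> nsums (hsupp y) i" using hpow_supp by blast
      also have "\<dots> \<subseteq> nsums T i" by (rule sums_mono[OF ysT])
      also have "\<dots> \<subseteq> T" by (rule nsums_closed[OF Tcl i(1)])
      finally show False using False by simp
    qed
    ultimately show ?thesis by simp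
  qed
  then show ?thesis using yM by blast
qed


theorem theorem32:
  fixes f :: "'k::field fps"
  assumes "fps_nth f 0 = 0" and "fps_nth f 1 \<noteq> 0"
  shows "ultra_iso (hdist :: ('g::linordered_ab_group_add \<Rightarrow> 'k) \<Rightarrow> _ \<Rightarrow> _) hahn_M hdist hahn_M (hahn_eval f)"
proof -
  have inj: "inj_on (hahn_eval f) (hahn_M :: ('g \<Rightarrow> 'k) set)"
    unfolding inj_on_def using dist_eq[OF assms(2)] by blast
  have img: "hahn_eval f ` (hahn_M :: ('g \<Rightarrow> 'k) set) = hahn_M"
  proof
    show "hahn_eval f ` (hahn_M :: ('g \<Rightarrow> 'k) set) \<subseteq> hahn_M" using eval_M by blast
    show "(hahn_M :: ('g \<Rightarrow> 'k) set) \<subseteq> hahn_eval f ` hahn_M"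
    proof
      fix w :: "'g \<Rightarrow> 'k" assume "w \<in> hahn_M"
      from surj_eval[OF assms(2) this] obtain y where "y \<in> hahn_M" "hahn_eval f y = w" by blast
      then show "w \<in> hahn_eval f ` hahn_M" by blast
    qed
  qed
  have bij: "bij_betw (hahn_eval f) (hahn_M :: ('g \<Rightarrow> 'k) set) hahn_M"
    using inj img by (simp add: bij_betw_def)
  have d: "\<forall>y\<in>(hahn_M :: ('g \<Rightarrow> 'k) set). \<forall>z\<in>hahn_M. y \<noteq> z \<longrightarrow>
      hdist (hahn_eval f y) (hahn_eval f z) = id (hdist y z)"
  proof (intro ballI impI)
    fix y z :: "'g \<Rightarrow> 'k" assume "y \<in> hahn_M" "z \<in> hahn_M" "y \<noteq> z"
    from dist_eq[OF assms(2) this] show "hdist (hahn_eval f y) (hahn_eval f z) = id (hdist y z)" by simp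
  qed
  have sm: "strict_mono_on (valset (hdist :: ('g \<Rightarrow> 'k) \<Rightarrow> _ \<Rightarrow> _) hahn_M) id"
    by (simp add: strict_mono_on_def)
  have im: "id ` valset (hdist :: ('g \<Rightarrow> 'k) \<Rightarrow> _ \<Rightarrow> _) hahn_M \<subseteq> valset (hdist :: ('g \<Rightarrow> 'k) \<Rightarrow> _ \<Rightarrow> _) hahn_M" by simp
  show ?thesis unfolding ultra_iso_def using bij sm im d by blast
qed

end
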